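(* Let $n,m$ be positive integers and $R_1,\dots,R_n:\{0,\dots,m\}\to\mathbb{R}$ arbitrary functions with $R_j(0)=0$. Let $0\le k<nm$ and let $\mathbf{x}$ be an optimal $k$-profile. Then there exists an optimal $(k+1)$-profile $\mathbf{y}$ such that $\mathrm{diff}(\mathbf{x},\mathbf{y})$ is irreducible.
   Context: A $k$-profile is a vector $\mathbf{x}=(x_1,\dots,x_n)$ with $x_j\in\{0,\dots,m\}$ and $\sum_j x_j=k$; it is optimal if its revenue $\sum_j R_j(x_j)$ is maximum among all $k$-profiles. For a $k$-profile $\mathbf{x}$ and a $(k+1)$-profile $\mathbf{y}$, $\mathrm{diff}(\mathbf{x},\mathbf{y})=(A,B)$ where $A$ is the multiset $\{y_i-x_i: i\in[n],\ y_i>x_i\}$ and $B$ is the multiset $\{x_i-y_i: i\in[n],\ x_i>y_i\}$ (both multisets of elements of $\{1,\dots,m\}$). A pair of multisets $(A,B)$ is reducible if the sum of some nonempty sub-multiset of $A$ equals the sum of some nonempty sub-multiset of $B$, and irreducible otherwise. *)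

theory Defs
  imports Complex_Main "HOL-Library.Multiset"
begin

text \<open>Indices are 0..n-1. A k-profile is a function nat => nat, zero outside
  the index range, with values in 0..m and summing to k.\<close>

definition profile :: "nat \<Rightarrow> nat \<Rightarrow> nat \<Rightarrow> (nat \<Rightarrow> nat) \<Rightarrow> bool" where
  "profile n m k x \<longleftrightarrow> (\<forall>j<n. x j \<le> m) \<and> (\<forall>j\<ge>n. x j = 0) \<and> (\<Sum>j<n. x j) = k"

definition revenue :: "nat \<Rightarrow> (nat \<Rightarrow> nat \<Rightarrow> real) \<Rightarrow> (nat \<Rightarrow> nat) \<Rightarrow> real" where
  "revenue n R x = (\<Sum>j<n. R j (x j))"

definition optimal_profile :: "nat \<Rightarrow> nat \<Rightarrow> (nat \<Rightarrow> nat \<Rightarrow> real) \<Rightarrow> nat \<Rightarrow> (nat \<Rightarrow> nat) \<Rightarrow> bool" where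
  "optimal_profile n m R k x \<longleftrightarrow> profile n m k x \<and>
     (\<forall>z. profile n m k z \<longrightarrow> revenue n R z \<le> revenue n R x)"

definition diffA :: "nat \<Rightarrow> (nat \<Rightarrow> nat) \<Rightarrow> (nat \<Rightarrow> nat) \<Rightarrow> nat multiset" where
  "diffA n x y = image_mset (\<lambda>i. y i - x i) (filter_mset (\<lambda>i. y i > x i) (mset_set {..<n}))"

definition diffB :: "nat \<Rightarrow> (nat \<Rightarrow> nat) \<Rightarrow> (nat \<Rightarrow> nat) \<Rightarrow> nat multiset" where
  "diffB n x y = image_mset (\<lambda>i. x i - y i) (filter_mset (\<lambda>i. x i > y i) (mset_set {..<n}))"

definition reducible :: "nat multiset \<Rightarrow> nat multiset \<Rightarrow> bool" where
  "reducible A B \<longleftrightarrow> (\<exists>A' B'. A' \<subseteq># A \<and> B' \<subseteq># B \<and> A' \<noteq> {#} \<and> B' \<noteq> {#}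
      \<and> sum_mset A' = sum_mset B')"

definition irreducible_pair :: "nat multiset \<Rightarrow> nat multiset \<Rightarrow> bool" where
  "irreducible_pair A B \<longleftrightarrow> \<not> reducible A B"

end

theory Submission
  imports Defs "HOL-Library.FuncSet"
begin

lemma sub_image_mset:
  "A' \<subseteq># image_mset f M \<Longrightarrow> \<exists>M'. M' \<subseteq># M \<and> A' = image_mset f M'"
proof (induction M arbitrary: A')
  case empty
  then show ?case by auto
next
  case (add a M)
  show ?case
  proof (cases "f a \<in># A'")
    case True
    have "A' - {#f a#} \<subseteq># image_mset f M"
      using add.prems by (simp add: subset_eq_diff_conv)
    then obtain M' where "M' \<subseteq># M" "A' - {#f a#} = image_mset f M'"
      using add.IH by blast
    moreover have "add_mset a M' \<subseteq># add_mset a M" using \<open>M' \<subseteq># M\<close> by simp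
    moreover have "A' = image_mset f (add_mset a M')"
      using True \<open>A' - {#f a#} = image_mset f M'\<close> by (metis image_mset_add_mset insert_DiffM)
    ultimately show ?thesis by blast
  next
    case False
    have "A' \<subseteq># image_mset f M"
      unfolding subseteq_mset_def
    proof
      fix b
      show "count A' b \<le> count (image_mset f M) b"
      proof (cases "b = f a")
        case True
        then show ?thesis using False by (simp add: not_in_iff)
      next
        case F: False
        have "count A' b \<le> count (image_mset f (add_mset a M)) b"
          using add.prems by (simp add: subseteq_mset_def)
        then show ?thesis using F by simp
      qed
    qed
    then obtain M' where M': "M' \<subseteq># M" "A' = image_mset f M'" using add.IH by blast
    have "M \<subseteq># add_mset a M" by (simp add: subseteq_mset_def)
    then have "M' \<subseteq># add_mset a M" using M'(1) by (rule subset_mset.order_trans[rotated])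
    then show ?thesis using M'(2) by blast
  qed
qed

lemma sub_mset_set:
  assumes "M' \<subseteq># mset_set S" "finite S"
  shows "M' = mset_set (set_mset M')"
proof (rule multiset_eqI)
  fix a
  have "count M' a \<le> count (mset_set S) a" using assms(1) by (simp add: mset_subset_eqD subseteq_mset_def)
  also have "\<dots> \<le> 1" using assms(2) by (simp add: count_mset_set')
  finally have c: "count M' a \<le> 1" .
  show "count M' a = count (mset_set (set_mset M')) a"
  proof (cases "a \<in># M'")
    case True
    then have "count M' a \<ge> 1" by (simp add: Suc_le_eq)
    then have "count M' a = 1" using c by linarith
    then show ?thesis using True by (simp add: count_mset_set)
  next
    case False
    then show ?thesis by (simp add: count_mset_set not_in_iff)
  qed
qed

lemma profile_exists: "k \<le> n * m \<Longrightarrow> \<exists>x. profile n m k x"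
proof (induction k)
  case 0
  then show ?case by (rule_tac x="\<lambda>_. 0" in exI) (simp add: profile_def)
next
  case (Suc k)
  then obtain x where x: "profile n m k x" by auto
  have "\<exists>j<n. x j < m"
  proof (rule ccontr)
    assume "\<not> ?thesis"
    then have "\<forall>j<n. x j = m" using x unfolding profile_def by (meson le_antisym not_less)
    then have "(\<Sum>j<n. x j) = n * m" by simp
    then show False using x Suc.prems by (simp add: profile_def)
  qed
  then obtain j where j: "j < n" "x j < m" by auto
  let ?y = "x(j := Suc (x j))"
  have "(\<Sum>i<n. ?y i) = (\<Sum>i<n. x i) + 1"
  proof -
    have "(\<Sum>i<n. ?y i) = ?y j + (\<Sum>i\<in>{..<n}-{j}. ?y i)"
      using j by (simp add: sum.remove)
    also have "(\<Sum>i\<in>{..<n}-{j}. ?y i) = (\<Sum>i\<in>{..<n}-{j}. x i)" by simp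
    also have "(\<Sum>i<n. x i) = x j + (\<Sum>i\<in>{..<n}-{j}. x i)"
      using j by (simp add: sum.remove)
    ultimately show ?thesis by simp
  qed
  then have "profile n m (Suc k) ?y" using x j by (auto simp: profile_def)
  then show ?case by blast
qed

lemma finite_profiles: "finite {y. profile n m k y}"
proof -
  have "{y. profile n m k y} \<subseteq> (\<lambda>g j. if j < n then g j else 0) ` ({..<n} \<rightarrow>\<^sub>E {0..m})"
  proof
    fix y assume "y \<in> {y. profile n m k y}"
    then have y: "profile n m k y" by simp
    let ?g = "restrict y {..<n}"
    have "?g \<in> {..<n} \<rightarrow>\<^sub>E {0..m}" using y by (auto simp: profile_def)
    moreover have "y = (\<lambda>j. if j < n then ?g j else 0)" using y by (auto simp: profile_def)
    ultimately show "y \<in> (\<lambda>g j. if j < n then g j else 0) ` ({..<n} \<rightarrow>\<^sub>E {0..m})" by blast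
  qed
  moreover have "finite ((\<lambda>g j. if j < n then g j else 0) ` ({..<n} \<rightarrow>\<^sub>E {0..m}))"
    by (intro finite_imageI finite_PiE) auto
  ultimately show ?thesis by (rule finite_subset)
qed

lemma optimal_exists:
  assumes "k \<le> n * m" shows "\<exists>y. optimal_profile n m R k y"
proof -
  let ?S = "{y. profile n m k y}"
  have "?S \<noteq> {}" using profile_exists[OF assms] by auto
  let ?r = "Max (revenue n R ` ?S)"
  have fin: "finite (revenue n R ` ?S)" using finite_profiles by auto
  have "?r \<in> revenue n R ` ?S" using fin \<open>?S \<noteq> {}\<close> by (intro Max_in) auto
  then obtain y where y: "y \<in> ?S" "revenue n R y = ?r" by auto
  have "\<forall>z\<in>?S. revenue n R z \<le> revenue n R y" using y(2) fin by auto
  then show ?thesis using y(1) unfolding optimal_profile_def by auto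
qed

theorem lemma3:
  fixes n m k :: nat and R :: "nat \<Rightarrow> nat \<Rightarrow> real" and x :: "nat \<Rightarrow> nat"
  assumes "n > 0" and "m > 0"
    and "\<forall>j<n. R j 0 = 0"
    and "k < n * m"
    and "optimal_profile n m R k x"
  shows "\<exists>y. optimal_profile n m R (k + 1) y \<and> irreducible_pair (diffA n x y) (diffB n x y)"
proof -
  define d where "d = (\<lambda>v. \<Sum>j<n. (v j - x j) + (x j - v j))"
  obtain y0 where "optimal_profile n m R (k + 1) y0"
    using optimal_exists assms(4) by (metis Suc_eq_plus1 Suc_leI)
  then obtain y where yopt: "optimal_profile n m R (k + 1) y"
    and ymin: "\<forall>v. optimal_profile n m R (k + 1) v \<longrightarrow> d y \<le> d v"
    using ex_has_least_nat[of "optimal_profile n m R (k + 1)" y0 d] by blast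
  have xp: "profile n m k x" and xopt: "\<forall>z. profile n m k z \<longrightarrow> revenue n R z \<le> revenue n R x"
    using assms(5) by (auto simp: optimal_profile_def)
  have yp: "profile n m (k+1) y" and yopt': "\<forall>z. profile n m (k+1) z \<longrightarrow> revenue n R z \<le> revenue n R y"
    using yopt by (auto simp: optimal_profile_def)
  have "irreducible_pair (diffA n x y) (diffB n x y)"
    unfolding irreducible_pair_def reducible_def
  proof (rule notI, elim exE conjE)
    fix A' B'
    assume A': "A' \<subseteq># diffA n x y" and B': "B' \<subseteq># diffB n x y" and A'ne: "A' \<noteq> {#}"
      and B'ne: "B' \<noteq> {#}" and eqs: "sum_mset A' = sum_mset B'"
    obtain MA where MA: "MA \<subseteq># filter_mset (\<lambda>i. y i > x i) (mset_set {..<n})"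
      "A' = image_mset (\<lambda>i. y i - x i) MA"
      using sub_image_mset[OF A'[unfolded diffA_def]] by blast
    obtain MB where MB: "MB \<subseteq># filter_mset (\<lambda>i. x i > y i) (mset_set {..<n})"
      "B' = image_mset (\<lambda>i. x i - y i) MB"
      using sub_image_mset[OF B'[unfolded diffB_def]] by blast
    define I where "I = set_mset MA"
    define J where "J = set_mset MB"
    have MAs: "MA \<subseteq># mset_set {..<n}" using MA(1) by (meson multiset_filter_subset subset_mset.order_trans)
    have MBs: "MB \<subseteq># mset_set {..<n}" using MB(1) by (meson multiset_filter_subset subset_mset.order_trans)
    have MAe: "MA = mset_set I" unfolding I_def using sub_mset_set[OF MAs] by simp
    have MBe: "MB = mset_set J" unfolding J_def using sub_mset_set[OF MBs] by simp
    have Isub: "I \<subseteq> {i. i < n \<and> y i > x i}"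
      unfolding I_def using set_mset_mono[OF MA(1)] by auto
    have Jsub: "J \<subseteq> {i. i < n \<and> x i > y i}"
      unfolding J_def using set_mset_mono[OF MB(1)] by auto
    have finI: "finite I" and finJ: "finite J" unfolding I_def J_def by auto
    have Ine: "I \<noteq> {}" using A'ne MA(2) I_def by auto
    have disj: "I \<inter> J = {}"
    proof (rule ccontr)
      assume "I \<inter> J \<noteq> {}"
      then obtain i where i: "i \<in> I" "i \<in> J" by auto
      have "x i < y i" using i(1) Isub by blast
      moreover have "y i < x i" using i(2) Jsub by blast
      ultimately show False by simp
    qed
    have sumeq: "(\<Sum>i\<in>I. y i - x i) = (\<Sum>i\<in>J. x i - y i)"
    proof -
      have "sum_mset A' = (\<Sum>i\<in>I. y i - x i)" unfolding MA(2) MAe by (rule sum_unfold_sum_mset[symmetric])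
      moreover have "sum_mset B' = (\<Sum>i\<in>J. x i - y i)" unfolding MB(2) MBe by (rule sum_unfold_sum_mset[symmetric])
      ultimately show ?thesis using eqs by simp
    qed
    have sumeqI: "(\<Sum>i\<in>I. int (y i) - int (x i)) = (\<Sum>i\<in>J. int (x i) - int (y i))"
    proof -
      have "(\<Sum>i\<in>I. int (y i) - int (x i)) = int (\<Sum>i\<in>I. y i - x i)"
        using Isub by (auto simp: of_nat_sum of_nat_diff intro!: sum.cong)
      also have "\<dots> = int (\<Sum>i\<in>J. x i - y i)" using sumeq by simp
      also have "\<dots> = (\<Sum>i\<in>J. int (x i) - int (y i))"
        using Jsub by (auto simp: of_nat_sum of_nat_diff intro!: sum.cong)
      finally show ?thesis .
    qed
    define K where "K = I \<union> J"
    have Ksub: "K \<subseteq> {..<n}" using Isub Jsub K_def by auto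
    define z where "z = (\<lambda>j. if j \<in> K then x j else y j)"
    define w where "w = (\<lambda>j. if j \<in> K then y j else x j)"
    have diffsum: "(\<Sum>j<n. int (z j)) - (\<Sum>j<n. int (y j)) = 0"
    proof -
      have "(\<Sum>j<n. int (z j)) - (\<Sum>j<n. int (y j)) = (\<Sum>j<n. int (z j) - int (y j))"
        by (simp add: sum_subtractf)
      also have "\<dots> = (\<Sum>j\<in>K. int (z j) - int (y j))"
        using Ksub by (intro sum.mono_neutral_right) (auto simp: z_def)
      also have "\<dots> = (\<Sum>j\<in>I. int (z j) - int (y j)) + (\<Sum>j\<in>J. int (z j) - int (y j))"
        unfolding K_def using finI finJ disj by (simp add: sum.union_disjoint)
      also have "\<dots> = - (\<Sum>i\<in>I. int (y i) - int (x i)) + (\<Sum>i\<in>J. int (x i) - int (y i))"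
        by (simp add: z_def K_def sum_negf[symmetric])
      also have "\<dots> = 0" using sumeqI by simp
      finally show ?thesis .
    qed
    have pw: "\<And>j. int (z j) + int (w j) = int (x j) + int (y j)" by (simp add: z_def w_def)
    have "(\<Sum>j<n. int (z j)) + (\<Sum>j<n. int (w j)) = (\<Sum>j<n. int (x j)) + (\<Sum>j<n. int (y j))"
      by (simp add: sum.distrib[symmetric] pw)
    moreover have "(\<Sum>j<n. int (x j)) = int k"
      using xp unfolding profile_def by (metis of_nat_sum)
    moreover have "(\<Sum>j<n. int (y j)) = int (k+1)"
      using yp unfolding profile_def by (metis of_nat_sum)
    ultimately have sums: "(\<Sum>j<n. int (z j)) = int (k+1)" "(\<Sum>j<n. int (w j)) = int k"
      using diffsum by linarith+
    have zs: "(\<Sum>j<n. z j) = k+1"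
    proof -
      have "int (\<Sum>j<n. z j) = int (k+1)" using sums(1) by (simp only: of_nat_sum)
      then show ?thesis by (simp only: of_nat_eq_iff)
    qed
    have ws: "(\<Sum>j<n. w j) = k"
    proof -
      have "int (\<Sum>j<n. w j) = int k" using sums(2) by (simp only: of_nat_sum)
      then show ?thesis by (simp only: of_nat_eq_iff)
    qed
    have zp: "profile n m (k+1) z"
      using xp yp zs unfolding profile_def by (auto simp: z_def)
    have wp: "profile n m k w"
      using xp yp ws unfolding profile_def by (auto simp: w_def)
    have "revenue n R z + revenue n R w = revenue n R x + revenue n R y"
      unfolding revenue_def sum.distrib[symmetric] by (intro sum.cong) (auto simp: z_def w_def)
    moreover have "revenue n R w \<le> revenue n R x" using xopt wp by blast
    ultimately have "revenue n R y \<le> revenue n R z" by linarith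
    then have zopt: "optimal_profile n m R (k+1) z"
      using zp yopt' unfolding optimal_profile_def by fastforce
    have "d z < d y"
      unfolding d_def
    proof (rule sum_strict_mono_ex1)
      show "finite {..<n}" by simp
      show "\<forall>j\<in>{..<n}. z j - x j + (x j - z j) \<le> y j - x j + (x j - y j)"
        by (auto simp: z_def)
      obtain i where "i \<in> I" using Ine by auto
      then show "\<exists>j\<in>{..<n}. z j - x j + (x j - z j) < y j - x j + (x j - y j)"
        using Isub by (intro bexI[of _ i]) (auto simp: z_def K_def)
    qed
    then show False using ymin zopt by fastforce
  qed
  then show ?thesis using yopt by blast
qed

end
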